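(* Let $T$ be an $n\times n$ complex matrix with distinct eigenvalues $\lambda_1,\dots,\lambda_n$. Let $u_1,\dots,u_n$ be unit eigenvectors of $T$ with $Tu_i=\lambda_iu_i$, let $v_1,\dots,v_n$ be unit eigenvectors of $T^*$ with $T^*v_i=\overline{\lambda_i}v_i$, and let $U=(u_1|\cdots|u_n)$ and $V=(v_1|\cdots|v_n)$. If $|\det U|\neq|\det V|$, then $T$ is not unitarily equivalent to a complex symmetric matrix.
   Context: A complex symmetric matrix is a square complex matrix $S$ with $S=S^t$. Two matrices $A,B\in M_n(\mathbb{C})$ are unitarily equivalent if $A=W^*BW$ for some unitary $W$. *)

theory Defs
  imports "HOL-Analysis.Analysis"
begin

definition cadj :: "complex^'n^'n \<Rightarrow> complex^'n^'n" where
  "cadj M = (\<chi> i j. cnj (M $ j $ i))"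

definition unitary_mat :: "complex^'n^'n \<Rightarrow> bool" where
  "unitary_mat W \<longleftrightarrow> cadj W ** W = mat 1"

definition unitarily_equivalent :: "complex^'n^'n \<Rightarrow> complex^'n^'n \<Rightarrow> bool" where
  "unitarily_equivalent A B \<longleftrightarrow> (\<exists>W. unitary_mat W \<and> A = cadj W ** B ** W)"

definition complex_symmetric :: "complex^'n^'n \<Rightarrow> bool" where
  "complex_symmetric S \<longleftrightarrow> transpose S = S"

end

theory Submission imports Defs begin

definition conjm :: "complex^'n^'n \<Rightarrow> complex^'n^'n" where
  "conjm M = (\<chi> i j. cnj (M $ i $ j))"
definition cnjv :: "complex^'n \<Rightarrow> complex^'n" where
  "cnjv x = (\<chi> i. cnj (x $ i))"
definition hip :: "complex^'n \<Rightarrow> complex^'n \<Rightarrow> complex" where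
  "hip x y = (\<Sum>k\<in>UNIV. cnj (x $ k) * y $ k)"

lemma det_conjm: "det (conjm M) = cnj (det M)"
  unfolding det_def conjm_def by (simp add: cnj_sum cnj_prod)

lemma cadj_conjm: "cadj M = conjm (transpose M)"
  by (simp add: cadj_def conjm_def transpose_def)

lemma det_cadj: "det (cadj M) = cnj (det M)"
  by (simp add: cadj_conjm det_conjm)

lemma cadj_mult: "cadj (A ** B) = cadj B ** cadj A"
  by (simp add: cadj_def matrix_matrix_mult_def vec_eq_iff cnj_sum mult.commute)

lemma cadj_cadj[simp]: "cadj (cadj A) = A"
  by (simp add: cadj_def vec_eq_iff)

lemma mv_scale: "(A::complex^'n^'n) *v (c *s x) = c *s (A *v x)"
  by (simp add: vec_eq_iff matrix_vector_mult_def sum_distrib_left mult.left_commute)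

lemma conjm_mv: "conjm A *v cnjv x = cnjv (A *v x)"
  by (simp add: vec_eq_iff matrix_vector_mult_def conjm_def cnjv_def cnj_sum)

lemma hip_adj: "hip (A *v x) y = hip x (cadj A *v y)"
proof -
  have L: "hip (A *v x) y = (\<Sum>k\<in>UNIV. \<Sum>j\<in>UNIV. cnj (A$k$j) * cnj (x$j) * y$k)"
    by (simp add: hip_def matrix_vector_mult_def cnj_sum sum_distrib_right)
  have R: "hip x (cadj A *v y) = (\<Sum>j\<in>UNIV. \<Sum>k\<in>UNIV. cnj (A$k$j) * cnj (x$j) * y$k)"
    by (simp add: hip_def cadj_def matrix_vector_mult_def sum_distrib_left mult_ac)
  show ?thesis unfolding L R by (rule sum.swap)
qed

lemma hip_scale_r: "hip x (c *s y) = c * hip x y"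
  by (simp add: hip_def sum_distrib_left mult_ac)
lemma hip_scale_l: "hip (c *s x) y = cnj c * hip x y"
  by (simp add: hip_def sum_distrib_left mult_ac)
lemma hip_cnjv: "hip (cnjv x) (cnjv y) = cnj (hip x y)"
  by (simp add: hip_def cnjv_def cnj_sum mult_ac)

lemma sqc: "complex_of_real (cmod z) ^ 2 = cnj z * z"
  using complex_norm_square[of z] by (simp add: mult.commute)

lemma hip_norm: "hip x x = complex_of_real (norm x ^ 2)"
proof -
  have "norm x ^ 2 = (\<Sum>k\<in>UNIV. cmod (x $ k) ^ 2)"
    by (simp add: norm_vec_def L2_set_def sum_nonneg)
  hence "complex_of_real (norm x ^ 2) = (\<Sum>k\<in>UNIV. complex_of_real (cmod (x $ k)) ^ 2)" by simp
  also have "\<dots> = hip x x" unfolding hip_def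
    by (rule sum.cong) (simp_all add: sqc)
  finally show ?thesis by simp
qed

lemma cadj_ker: assumes "cadj A ** A = mat 1" shows "hip (A *v x) (A *v y) = hip x y"
proof -
  have "hip (A *v x) (A *v y) = hip x (cadj A *v (A *v y))" by (rule hip_adj)
  also have "cadj A *v (A *v y) = y" by (simp add: assms matrix_vector_mul_assoc)
  finally show ?thesis .
qed

lemma mv_sum: "(A::complex^'n^'n) *v sum f S = (\<Sum>j\<in>S. A *v f j)"
  by (simp add: linear_sum[OF matrix_vector_mul_linear])

lemma indep:
  fixes T :: "complex^'n^'n" and u :: "'n \<Rightarrow> complex^'n"
  assumes inj: "inj lam" and nz: "\<And>i. u i \<noteq> 0" and ev: "\<And>i. T *v u i = lam i *s u i"
  shows "finite S \<Longrightarrow> (\<Sum>j\<in>S. x j *s u j) = 0 \<Longrightarrow> j \<in> S \<Longrightarrow> x j = 0"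
proof (induction S arbitrary: x j rule: finite_induct)
  case empty
  then show ?case by simp
next
  case (insert a S)
  have h0: "(\<Sum>j\<in>S. x j *s u j) = - (x a *s u a)"
    using insert(1,2,4) by (simp add: eq_neg_iff_add_eq_0 add.commute)
  have "T *v (\<Sum>j\<in>insert a S. x j *s u j) = 0" using insert(4) by simp
  hence "(\<Sum>j\<in>insert a S. (x j * lam j) *s u j) = 0"
    by (simp add: mv_sum mv_scale ev vector_smult_assoc mult.commute del: sum.insert)
  hence h1: "(\<Sum>j\<in>S. (x j * lam j) *s u j) = - ((x a * lam a) *s u a)"
    using insert(1,2) by (simp add: eq_neg_iff_add_eq_0 add.commute)
  have "(\<Sum>j\<in>S. (x j * (lam j - lam a)) *s u j)
      = (\<Sum>j\<in>S. (x j * lam j) *s u j) - lam a *s (\<Sum>j\<in>S. x j *s u j)"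
    by (simp add: vec_eq_iff sum_component sum_subtractf sum_distrib_left algebra_simps)
  also have "\<dots> = 0" unfolding h0 h1 by (simp add: vec_eq_iff algebra_simps)
  finally have z: "(\<Sum>j\<in>S. (x j * (lam j - lam a)) *s u j) = 0" .
  have xS: "x j = 0" if "j \<in> S" for j
  proof -
    have "x j * (lam j - lam a) = 0" using insert.IH[OF z that] .
    moreover have "lam j \<noteq> lam a" using inj insert(2) that by (metis injD)
    ultimately show ?thesis by simp
  qed
  hence "(\<Sum>j\<in>S. x j *s u j) = 0" by simp
  hence "x a *s u a = 0" using h0 by simp
  moreover obtain k where "u a $ k \<noteq> 0" using nz[of a] by (auto simp: vec_eq_iff)
  ultimately have "x a = 0" by (auto simp: vec_eq_iff)
  then show ?case using xS insert(5) by auto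
qed

lemma cadj_mat1[simp]: "cadj (mat 1) = mat 1"
  by (simp add: cadj_def mat_def vec_eq_iff)

lemma cnjv_scale: "cnjv (c *s x) = cnj c *s cnjv x"
  by (simp add: cnjv_def vec_eq_iff)

lemma cmod1: assumes "cnj z * z = 1" shows "cmod z = 1"
proof -
  have "complex_of_real (cmod z ^ 2) = 1" using assms by (simp only: complex_norm_square mult.commute)
  hence "cmod z ^ 2 = 1" using of_real_eq_1_iff by blast
  thus ?thesis by (smt (verit) norm_ge_zero power2_eq_1_iff)
qed

theorem corollary2:
  fixes T :: "complex^'n^'n" and lam :: "'n \<Rightarrow> complex"
    and u v :: "'n \<Rightarrow> complex^'n"
  assumes "inj lam"
    and "\<And>i. norm (u i) = 1" and "\<And>i. T *v u i = lam i *s u i"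
    and "\<And>i. norm (v i) = 1" and "\<And>i. cadj T *v v i = cnj (lam i) *s v i"
    and "cmod (det (\<chi> i j. u j $ i)) \<noteq> cmod (det (\<chi> i j. v j $ i))"
  shows "\<not> (\<exists>S. complex_symmetric S \<and> unitarily_equivalent T S)"
proof
  assume "\<exists>S. complex_symmetric S \<and> unitarily_equivalent T S"
  then obtain S W where Ssym: "transpose S = S" and WW: "cadj W ** W = mat 1"
    and TW: "T = cadj W ** S ** W"
    by (auto simp: complex_symmetric_def unitarily_equivalent_def unitary_mat_def)
  have WW': "W ** cadj W = mat 1" using WW matrix_left_right_inverse by blast
  define U where "U = (\<chi> i j. u j $ i)"
  define V where "V = (\<chi> i j. v j $ i)"
  have unz: "u i \<noteq> 0" for i using assms(2)[of i] by auto
  have Ux: "U *v x = (\<Sum>j\<in>UNIV. x $ j *s u j)" for x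
    by (simp add: U_def vec_eq_iff matrix_vector_mult_def sum_component mult.commute)
  have "\<forall>x. U *v x = 0 \<longrightarrow> x = 0"
  proof (intro allI impI)
    fix x assume "U *v x = 0"
    hence "(\<Sum>j\<in>UNIV. x $ j *s u j) = 0" by (simp add: Ux)
    hence "x $ j = 0" for j using indep[OF assms(1) unz assms(3), of UNIV "\<lambda>j. x $ j" j] by simp
    thus "x = 0" by (simp add: vec_eq_iff)
  qed
  then obtain B where "B ** U = mat 1" using matrix_left_invertible_ker by blast
  hence "U ** B = mat 1" using matrix_left_right_inverse by blast
  hence NU: "cadj B ** cadj U = mat 1" by (metis cadj_mult cadj_mat1)
  define N where "N = cadj B"
  have NU': "N *v (cadj U *v y) = y" for y by (simp add: N_def NU matrix_vector_mul_assoc)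
  define w where "w i = cadj W *v cnjv (W *v u i)" for i
  have cT: "cadj T = cadj W ** conjm S ** W"
  proof -
    have "cadj S = conjm S" using Ssym by (simp add: cadj_conjm)
    then show ?thesis by (simp add: TW cadj_mult matrix_mul_assoc)
  qed
  have WT: "S ** W = W ** T" by (simp add: TW matrix_mul_assoc WW')
  have wev: "cadj T *v w i = cnj (lam i) *s w i" for i
  proof -
    have "cadj T *v w i = cadj W *v (conjm S *v ((W ** cadj W) *v cnjv (W *v u i)))"
      by (simp add: cT w_def matrix_vector_mul_assoc matrix_mul_assoc)
    also have "\<dots> = cadj W *v cnjv ((S ** W) *v u i)"
      by (simp add: WW' conjm_mv matrix_vector_mul_assoc)
    also have "\<dots> = cadj W *v cnjv (lam i *s (W *v u i))"
      by (simp add: WT assms(3) mv_scale flip: matrix_vector_mul_assoc)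
    also have "\<dots> = cnj (lam i) *s w i" by (simp add: cnjv_scale mv_scale w_def)
    finally show ?thesis .
  qed
  have hw: "hip (w i) (w i) = 1" for i
  proof -
    have "hip (w i) (w i) = hip (cnjv (W *v u i)) (cnjv (W *v u i))"
      unfolding w_def by (rule cadj_ker) (simp add: WW')
    also have "\<dots> = cnj (hip (u i) (u i))" by (simp add: hip_cnjv cadj_ker[OF WW])
    also have "\<dots> = 1" by (simp add: hip_norm assms(2))
    finally show ?thesis .
  qed
  have orth: "hip (u j) y = 0" if "cadj T *v y = cnj (lam i) *s y" "j \<noteq> i" for i j y
  proof -
    have "cnj (lam j) * hip (u j) y = cnj (lam i) * hip (u j) y"
      using hip_adj[of T "u j" y] by (simp add: assms(3) hip_scale_l hip_scale_r that(1))
    moreover have "cnj (lam j) \<noteq> cnj (lam i)" using assms(1) that(2) by (metis complex_cnj_cancel_iff injD)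
    ultimately show ?thesis by simp
  qed
  have cU: "(cadj U *v y) $ j = hip (u j) y" for y j
    by (simp add: U_def cadj_def matrix_vector_mult_def hip_def)
  have rep: "y = hip (u i) y *s (N *v axis i 1)" if "cadj T *v y = cnj (lam i) *s y" for i y
  proof -
    have "cadj U *v y = hip (u i) y *s axis i 1"
      using orth[OF that] by (auto simp: vec_eq_iff cU axis_def)
    hence "N *v (cadj U *v y) = hip (u i) y *s (N *v axis i 1)" by (simp add: mv_scale)
    thus ?thesis using NU'[of y] by simp
  qed
  define c where "c i = hip (u i) (v i) / hip (u i) (w i)" for i
  have vc: "v i = c i *s w i \<and> cmod (c i) = 1" for i
  proof -
    have bnz: "hip (u i) (w i) \<noteq> 0" using rep[OF wev[of i]] hw[of i] by (auto simp: hip_def)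
    define a where "a = hip (u i) (v i)"
    define b where "b = hip (u i) (w i)"
    define r where "r = N *v axis i 1"
    have vr: "v i = a *s r" using rep[OF assms(5)[of i]] unfolding a_def r_def .
    have wr: "w i = b *s r" using rep[OF wev[of i]] unfolding b_def r_def .
    have "c i *s w i = (c i * b) *s r" by (simp add: wr vector_smult_assoc)
    also have "c i * b = a" using bnz by (simp add: c_def a_def b_def)
    finally have "v i = c i *s w i" using vr by simp
    moreover have "c i * cnj (c i) = 1"
      using arg_cong[OF calculation, of "\<lambda>z. hip z z"] hip_norm[of "v i"] assms(4)[of i] hw[of i]
      by (simp add: hip_scale_l hip_scale_r)
    hence "cnj (c i) * c i = 1" by (simp only: mult.commute)
    hence "cmod (c i) = 1" by (rule cmod1)
    ultimately show ?thesis by simp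
  qed
  define Wm where "Wm = (\<chi> k i. w i $ k)"
  define D where "D = (\<chi> i j. if i = j then c i else (0::complex))"
  have "V $ k $ i = (Wm ** D) $ k $ i" for k i
  proof -
    have "(Wm ** D) $ k $ i = (\<Sum>j\<in>UNIV. if j = i then Wm $ k $ j * c j else 0)"
      unfolding matrix_matrix_mult_def D_def by (simp add: if_distrib cong: if_cong)
    also have "\<dots> = Wm $ k $ i * c i" by simp
    also have "\<dots> = V $ k $ i" using vc[of i] by (simp add: Wm_def V_def mult.commute)
    finally show ?thesis by simp
  qed
  hence "V = Wm ** D" by (simp add: vec_eq_iff)
  hence dV: "det V = det Wm * (\<Prod>i\<in>UNIV. c i)"
    by (simp add: det_mul det_diagonal D_def)
  have WU: "(W ** U) $ l $ i = (W *v u i) $ l" for l i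
    by (simp add: matrix_matrix_mult_def matrix_vector_mult_def U_def)
  have "Wm $ k $ i = (cadj W ** conjm (W ** U)) $ k $ i" for k i
    by (simp add: matrix_matrix_mult_def matrix_vector_mult_def conjm_def cnjv_def WU w_def Wm_def U_def)
  hence "Wm = cadj W ** conjm (W ** U)" by (simp add: vec_eq_iff)
  hence dWm: "det Wm = cnj (det W) * cnj (det W * det U)"
    by (simp add: det_mul det_cadj det_conjm)
  have "cnj (det W) * det W = 1" using arg_cong[OF WW, of det] by (simp add: det_mul det_cadj)
  hence "cmod (det W) = 1" by (rule cmod1)
  hence "cmod (det V) = cmod (det U)"
    using dV dWm vc by (simp add: norm_mult prod_norm[symmetric])
  thus False using assms(6) U_def V_def by simp
qed

end
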